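(* Assume $m_0:=\int t\,\mathcal{T}(\mathrm{d}t)<\infty$. For every reset law $\mathcal{R}$, with $T\sim\mathcal{T}$ and $R\sim\mathcal{R}$ independent, $$\mathcal{T}^{\mathcal{R}}[\mathrm{id}]=\frac{\mathsf{E}[T\wedge R]}{\mathsf{P}(T\leq R)}=\frac{\int\left(\int_0^r\overline{F}(u)\,\mathrm{d}u\right)\mathcal{R}(\mathrm{d}r)}{\int F(r)\,\mathcal{R}(\mathrm{d}r)},$$ and $$\inf_{t\in(0,\infty)}\frac{\int_0^t\overline{F}(u)\,\mathrm{d}u}{F(t)}\leq\mathcal{T}^{\mathcal{R}}[\mathrm{id}]\leq\sup_{t\in(0,\infty)}\frac{\int_0^t\overline{F}(u)\,\mathrm{d}u}{F(t)}.$$ Moreover $\sup_{\mathcal{R}}\mathcal{T}^{\mathcal{R}}[\mathrm{id}]=\sup_{r\in(0,\infty)}\mathcal{T}^{\delta_r}[\mathrm{id}]=\sup_{t\in(0,\infty)}\frac{\int_0^t\overline{F}(u)\,\mathrm{d}u}{F(t)}$, and the same with $\inf$ in place of $\sup$ throughout, where $\sup_{\mathcal{R}}$, $\inf_{\mathcal{R}}$ range over all reset laws.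
   Context: Standing assumptions: $\mathcal{T}$ is a probability law on the Borel sets of $[0,\infty]$ with $\mathcal{T}((0,\infty])>0$ and $\inf\mathrm{supp}(\mathcal{T})=0$; $\overline{F}(t):=\mathcal{T}((t,\infty])$ and $F:=1-\overline{F}$ on $[0,\infty)$, with $F(\infty):=1$, $\overline{F}(\infty):=0$. $\mathcal{Q}[\mathrm{id}]:=\int t\,\mathcal{Q}(\mathrm{d}t)$. A reset law is a probability law $\mathcal{R}$ on the Borel sets of $[0,\infty]$ with $\mathcal{R}((0,\infty])>0$ and $\mathcal{R}([0,\infty))>0$. Given a reset law $\mathcal{R}$: let $(T_k)$ be i.i.d. with law $\mathcal{T}$ and $(R_k)$ an independent i.i.d. sequence with law $\mathcal{R}$; $\mathcal{T}^{\mathcal{R}}$ is the law of $\tilde T$ defined a.s. by $\tilde T=R_1+\cdots+R_{k-1}+T_k$ on $\{R_1<T_1,\ldots,R_{k-1}<T_{k-1},T_k\leq R_k\}$, $k\in\mathbb{N}$. $\delta_r$ is the Dirac mass at $r$. *)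

theory Defs
  imports "HOL-Probability.Probability"
begin

text \<open>Laws on [0,\<infinity>] are measures on the Borel sets of ennreal.\<close>

definition measure_support :: "ennreal measure \<Rightarrow> ennreal set" where
  "measure_support M = {x. \<forall>U. open U \<longrightarrow> x \<in> U \<longrightarrow> emeasure M U > 0}"

definition is_law :: "ennreal measure \<Rightarrow> bool" where
  "is_law M \<longleftrightarrow> prob_space M \<and> sets M = sets borel"

definition standing_T :: "ennreal measure \<Rightarrow> bool" where
  "standing_T T \<longleftrightarrow> is_law T \<and> emeasure T {0<..} > 0 \<and> Inf (measure_support T) = 0"

definition reset_law :: "ennreal measure \<Rightarrow> bool" where
  "reset_law R \<longleftrightarrow> is_law R \<and> emeasure R {0<..} > 0 \<and> emeasure R {..<\<infinity>} > 0"

text \<open>Survival function and distribution function (F(\<infinity>) = 1, Fbar(\<infinity>) = 0).\<close>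
definition Fbar :: "ennreal measure \<Rightarrow> ennreal \<Rightarrow> real" where
  "Fbar T t = measure T {t<..}"

definition Fdist :: "ennreal measure \<Rightarrow> ennreal \<Rightarrow> real" where
  "Fdist T t = 1 - Fbar T t"

definition intFbar :: "ennreal measure \<Rightarrow> ennreal \<Rightarrow> ennreal" where
  "intFbar T r = (\<integral>\<^sup>+ u. indicator {u::real. 0 \<le> u \<and> ennreal u < r} u * ennreal (Fbar T (ennreal u)) \<partial>lborel)"

definition mean :: "ennreal measure \<Rightarrow> ennreal" where
  "mean Q = (\<integral>\<^sup>+ t. t \<partial>Q)"

text \<open>Underlying probability space: i.i.d. pairs (T_k, R_k), k = 0,1,2,...\<close>
definition reset_space :: "ennreal measure \<Rightarrow> ennreal measure \<Rightarrow> (nat \<Rightarrow> ennreal \<times> ennreal) measure" where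
  "reset_space T R = PiM UNIV (\<lambda>_::nat. T \<Otimes>\<^sub>M R)"

text \<open>The reset time: R_0 + ... + R_{k-1} + T_k where k is the first index with T_k \<le> R_k
  (so R_j < T_j for j < k).  Off the null event that no such k exists, the value is arbitrary (0).\<close>
definition reset_time :: "(nat \<Rightarrow> ennreal \<times> ennreal) \<Rightarrow> ennreal" where
  "reset_time \<omega> = (if \<exists>k. fst (\<omega> k) \<le> snd (\<omega> k)
     then (let k = (LEAST k. fst (\<omega> k) \<le> snd (\<omega> k)) in (\<Sum>j<k. snd (\<omega> j)) + fst (\<omega> k))
     else 0)"

definition reset_law_of :: "ennreal measure \<Rightarrow> ennreal measure \<Rightarrow> ennreal measure" where
  "reset_law_of T R = distr (reset_space T R) borel reset_time"

definition ratio :: "ennreal measure \<Rightarrow> real \<Rightarrow> ennreal" where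
  "ratio T t = intFbar T (ennreal t) / ennreal (Fdist T (ennreal t))"

end

theory Submission
  imports Defs
begin

lemma PiM_nat_prod:
  fixes M :: "'a measure" and f :: "nat \<Rightarrow> 'a \<Rightarrow> ennreal"
  assumes M: "prob_space M" and J: "finite J" and f: "\<And>i. i\<in>J \<Longrightarrow> f i \<in> borel_measurable M"
  shows "(\<integral>\<^sup>+\<omega>. (\<Prod>i\<in>J. f i (\<omega> i)) \<partial>PiM UNIV (\<lambda>_. M)) = (\<Prod>i\<in>J. \<integral>\<^sup>+x. f i x \<partial>M)"
proof -
  interpret P: product_prob_space "\<lambda>_::nat. M" UNIV
    using M by (simp add: product_prob_space_def product_prob_space_axioms_def product_sigma_finite_def prob_space_imp_sigma_finite)
  have meas: "(\<lambda>x. \<Prod>i\<in>J. f i (x i)) \<in> borel_measurable (PiM J (\<lambda>_. M))"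
    using f by (intro borel_measurable_prod_ennreal) (auto intro!: measurable_compose[OF measurable_component_singleton])
  have "(\<integral>\<^sup>+\<omega>. (\<Prod>i\<in>J. f i (\<omega> i)) \<partial>PiM UNIV (\<lambda>_. M))
     = (\<integral>\<^sup>+\<omega>. (\<Prod>i\<in>J. f i (restrict \<omega> J i)) \<partial>PiM UNIV (\<lambda>_. M))"
    by (intro nn_integral_cong prod.cong) auto
  also have "\<dots> = (\<integral>\<^sup>+x. (\<Prod>i\<in>J. f i (x i)) \<partial>distr (PiM UNIV (\<lambda>_. M)) (PiM J (\<lambda>_. M)) (\<lambda>x. restrict x J))"
    using meas by (subst nn_integral_distr) (auto intro!: measurable_restrict_subset)
  also have "\<dots> = (\<integral>\<^sup>+x. (\<Prod>i\<in>J. f i (x i)) \<partial>PiM J (\<lambda>_. M))"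
    using J by (subst P.distr_PiM_restrict_finite) auto
  also have "\<dots> = (\<Prod>i\<in>J. \<integral>\<^sup>+x. f i x \<partial>M)"
    using J f by (subst P.product_nn_integral_prod) auto
  finally show ?thesis .
qed
lemma reset_time_series:
  "reset_time \<omega> = indicator {\<omega>. \<exists>k. fst (\<omega> k) \<le> snd (\<omega> k)} \<omega> *
     (\<Sum>j. \<Prod>i<Suc j. (if i<j then indicator {p. snd p < fst p} (\<omega> i) else min (fst (\<omega> i)) (snd (\<omega> i))))"
    (is "_ = _ * (\<Sum>j. ?t j)")
proof (cases "\<exists>k. fst (\<omega> k) \<le> snd (\<omega> k)")
  case False
  then show ?thesis by (simp add: reset_time_def)
next
  case True
  define K where "K = (LEAST k. fst (\<omega> k) \<le> snd (\<omega> k))"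
  have K: "fst (\<omega> K) \<le> snd (\<omega> K)" unfolding K_def using True by (rule LeastI_ex)
  have lt: "snd (\<omega> i) < fst (\<omega> i)" if "i < K" for i
    using not_less_Least[OF that[unfolded K_def]] by (simp add: not_le)
  have t0: "?t j = 0" if "K < j" for j
  proof -
    have "K \<in> {..<Suc j}" using that by auto
    moreover have "(if K<j then indicator {p. snd p < fst p} (\<omega> K) else min (fst (\<omega> K)) (snd (\<omega> K))) = (0::ennreal)"
      using that K by (simp add: indicator_def not_less)
    ultimately show ?thesis by (intro prod_zero finite_lessThan bexI[of _ K])
  qed
  have t1: "?t j = min (fst (\<omega> j)) (snd (\<omega> j))" if "j \<le> K" for j
  proof -
    have "?t j = (\<Prod>i<j. (if i<j then indicator {p. snd p < fst p} (\<omega> i) else min (fst (\<omega> i)) (snd (\<omega> i)))) * min (fst (\<omega> j)) (snd (\<omega> j))"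
      by (simp add: prod.lessThan_Suc)
    also have "(\<Prod>i<j. (if i<j then indicator {p. snd p < fst p} (\<omega> i) else min (fst (\<omega> i)) (snd (\<omega> i)))) = (1::ennreal)"
      using that lt by (intro prod.neutral) (auto simp: indicator_def)
    finally show ?thesis by simp
  qed
  have "(\<Sum>j. ?t j) = (\<Sum>j<Suc K. ?t j)"
    by (rule suminf_finite) (use t0 in \<open>auto simp del: prod.lessThan_Suc\<close>)
  also have "\<dots> = (\<Sum>j<K. ?t j) + ?t K" by simp
  also have "(\<Sum>j<K. ?t j) = (\<Sum>j<K. snd (\<omega> j))"
    using lt t1 by (intro sum.cong) (force simp: min_def dest: lt)+
  also have "?t K = fst (\<omega> K)" using t1[of K] K by (simp add: min_def)
  finally show ?thesis using True by (simp add: reset_time_def K_def Let_def)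
qed
lemma reset_mean:
  assumes Tp: "prob_space T" and Ts: "sets T = sets borel"
    and Rp: "prob_space R" and Rs: "sets R = sets borel"
    and pos: "emeasure (T \<Otimes>\<^sub>M R) {p. fst p \<le> snd p} > 0"
  shows "mean (reset_law_of T R) = (\<integral>\<^sup>+ p. min (fst p) (snd p) \<partial>(T \<Otimes>\<^sub>M R)) / emeasure (T \<Otimes>\<^sub>M R) {p. fst p \<le> snd p}"
proof -
  define M where "M = T \<Otimes>\<^sub>M R"
  interpret T: prob_space T by fact
  interpret R: prob_space R by fact
  interpret TR: pair_prob_space T R by unfold_locales
  have Mp: "prob_space M" unfolding M_def by (rule TR.P.prob_space_axioms)
  interpret M: prob_space M by fact
  have sM[measurable_cong]: "sets M = sets (borel \<Otimes>\<^sub>M borel)"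
    unfolding M_def by (intro sets_pair_measure_cong Ts Rs)
  have spM: "space M = UNIV" using sets_eq_imp_space_eq[OF sM] by (simp add: space_pair_measure)
  define A where "A = {p::ennreal\<times>ennreal. snd p < fst p}"
  define B where "B = {p::ennreal\<times>ennreal. fst p \<le> snd p}"
  have "{x\<in>space (borel \<Otimes>\<^sub>M borel). snd x < fst (x::ennreal\<times>ennreal)} \<in> sets (borel \<Otimes>\<^sub>M borel)" by measurable
  then have A[measurable]: "A \<in> sets M" unfolding A_def sM by (simp add: space_pair_measure)
  have "{x\<in>space (borel \<Otimes>\<^sub>M borel). fst x \<le> snd (x::ennreal\<times>ennreal)} \<in> sets (borel \<Otimes>\<^sub>M borel)" by measurable
  then have B[measurable]: "B \<in> sets M" unfolding B_def sM by (simp add: space_pair_measure)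
  have mm[measurable]: "(\<lambda>p::ennreal\<times>ennreal. min (fst p) (snd p)) \<in> borel_measurable M"
    by (subst measurable_cong_sets[OF sM refl]) measurable
  define P where "P = PiM UNIV (\<lambda>_::nat. M)"
  have Pp: "prob_space P" unfolding P_def by (rule prob_space_PiM) (rule Mp)
  interpret P: prob_space P by fact
  define t where "t j \<omega> = (\<Prod>i<Suc j. (if i<j then indicator A (\<omega> i) else min (fst (\<omega> i)) (snd (\<omega> i))))"
    for j and \<omega> :: "nat \<Rightarrow> ennreal \<times> ennreal"
  define E where "E = {\<omega>::nat \<Rightarrow> ennreal\<times>ennreal. \<exists>k. fst (\<omega> k) \<le> snd (\<omega> k)}"
  have rt: "reset_time = (\<lambda>\<omega>. indicator E \<omega> * (\<Sum>j. t j \<omega>))"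
    by (rule ext) (simp add: reset_time_series E_def t_def A_def)
  have t_meas[measurable]: "t j \<in> borel_measurable P" for j
    unfolding t_def P_def
    by (intro borel_measurable_prod_ennreal) (auto intro!: measurable_compose[OF measurable_component_singleton])
  have spP: "space P = UNIV" unfolding P_def by (simp add: space_PiM spM)
  have E_eq: "E = (\<Union>k. {\<omega>\<in>space P. \<omega> k \<in> B})" unfolding E_def B_def spP by auto
  have E_meas[measurable]: "E \<in> sets P" unfolding E_eq P_def
    by (intro sets.countable_UN measurable_sets[OF measurable_component_singleton]) auto
  have rt_meas: "reset_time \<in> borel_measurable P" unfolding rt by measurable
  have t_int: "(\<integral>\<^sup>+\<omega>. t j \<omega> \<partial>P) = emeasure M A ^ j * (\<integral>\<^sup>+ p. min (fst p) (snd p) \<partial>M)" for j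
  proof -
    have "(\<integral>\<^sup>+\<omega>. t j \<omega> \<partial>P) = (\<Prod>i<Suc j. \<integral>\<^sup>+x. (if i<j then indicator A x else min (fst x) (snd x)) \<partial>M)"
      unfolding t_def P_def
      using PiM_nat_prod[OF Mp, of "{..<Suc j}" "\<lambda>i x. if i<j then indicator A x else min (fst x) (snd x)"]
      by simp
    also have "\<dots> = (\<Prod>i<j. \<integral>\<^sup>+x. indicator A x \<partial>M) * (\<integral>\<^sup>+ p. min (fst p) (snd p) \<partial>M)"
      by (simp add: prod.lessThan_Suc)
    finally show ?thesis by simp
  qed
  define q where "q = measure M A"
  define a where "a = (\<integral>\<^sup>+ p. min (fst p) (snd p) \<partial>M)"
  have qA: "emeasure M A = ennreal q" unfolding q_def by (rule M.emeasure_eq_measure)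
  have BA: "B = space M - A" unfolding A_def B_def spM by (auto simp: not_less)
  have pB: "emeasure M B = ennreal (1 - q)"
    unfolding q_def BA using M.prob_compl[OF A] M.emeasure_eq_measure by simp
  have q1: "q < 1" using pos pB unfolding M_def[symmetric] B_def[symmetric] by simp
  have q0: "0 \<le> q" unfolding q_def by simp
  have null: "emeasure P (space P - E) = 0"
  proof -
    have bnd: "measure P (space P - E) \<le> q ^ n" for n
    proof -
      have X[measurable]: "{\<omega>\<in>space P. \<forall>k<n. \<omega> k \<in> A} \<in> sets P"
        unfolding P_def by measurable
      have "emeasure P (space P - E) \<le> emeasure P {\<omega>\<in>space P. \<forall>k<n. \<omega> k \<in> A}"
        by (intro emeasure_mono X) (auto simp: E_def A_def not_le)
      also have "\<dots> = (\<integral>\<^sup>+\<omega>. (\<Prod>k<n. indicator A (\<omega> k)) \<partial>P)"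
        unfolding nn_integral_indicator[OF X, symmetric]
      proof (intro nn_integral_cong)
        fix \<omega> assume "\<omega> \<in> space P"
        show "indicator {\<omega> \<in> space P. \<forall>k<n. \<omega> k \<in> A} \<omega> = (\<Prod>k<n. indicator A (\<omega> k) :: ennreal)"
        proof (cases "\<forall>k<n. \<omega> k \<in> A")
          case True then show ?thesis using \<open>\<omega> \<in> space P\<close> by (simp add: indicator_def)
        next
          case False
          then obtain k where "k < n" "\<omega> k \<notin> A" by auto
          then have "(\<Prod>k<n. indicator A (\<omega> k) :: ennreal) = 0"
            by (intro prod_zero finite_lessThan bexI[of _ k]) auto
          then show ?thesis using False by (simp add: indicator_def)
        qed
      qed
      also have "\<dots> = (\<Prod>k<n. emeasure M A)"
        unfolding P_def by (subst PiM_nat_prod[OF Mp]) auto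
      also have "\<dots> = ennreal (q ^ n)" by (simp add: qA ennreal_power q0)
      finally show ?thesis by (simp add: P.emeasure_eq_measure q0)
    qed
    have "(\<lambda>n. q ^ n) \<longlonglongrightarrow> 0" using q0 q1 by (intro LIMSEQ_power_zero) auto
    then have "measure P (space P - E) \<le> 0" by (rule LIMSEQ_le_const) (use bnd in auto)
    then have "measure P (space P - E) = 0" by (simp add: antisym)
    then show ?thesis by (simp add: P.emeasure_eq_measure)
  qed
  have AE_E: "AE \<omega> in P. \<omega> \<in> E"
    by (rule AE_I'[of "space P - E"]) (use null in \<open>auto\<close>)
  have "mean (reset_law_of T R) = (\<integral>\<^sup>+\<omega>. reset_time \<omega> \<partial>P)"
    unfolding mean_def reset_law_of_def reset_space_def M_def[symmetric] P_def[symmetric]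
    by (subst nn_integral_distr[OF rt_meas]) auto
  also have "\<dots> = (\<integral>\<^sup>+\<omega>. (\<Sum>j. t j \<omega>) \<partial>P)"
    by (rule nn_integral_cong_AE) (use AE_E in \<open>auto simp: rt\<close>)
  also have "\<dots> = (\<Sum>j. \<integral>\<^sup>+\<omega>. t j \<omega> \<partial>P)"
    by (rule nn_integral_suminf) measurable
  also have "\<dots> = (\<Sum>j. a * ennreal (q ^ j))"
    by (simp add: t_int qA a_def ennreal_power q0 mult.commute)
  also have "\<dots> = a * ennreal (1 / (1 - q))"
    using q0 q1 by (simp add: ennreal_suminf_cmult suminf_ennreal_eq[OF _ geometric_sums] suminf_geometric)
  also have "\<dots> = a / ennreal (1 - q)"
    proof -
    have "ennreal (1 / (1 - q)) = 1 / ennreal (1 - q)" using q1 divide_ennreal[of 1 "1 - q"] by simp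
    then show ?thesis by (simp add: divide_ennreal_def)
  qed
  finally show ?thesis unfolding a_def M_def B_def pB[unfolded M_def B_def] .
qed
lemma len_ind: "(\<integral>\<^sup>+u. indicator {u::real. 0 \<le> u \<and> ennreal u < m} u \<partial>lborel) = m"
proof (cases m rule: ennreal_cases)
  case (real x)
  have "{u. 0\<le>u \<and> ennreal u < ennreal x} = {0..<x}" using real ennreal_less_iff by auto
  then show ?thesis using real by (simp add: emeasure_lborel_Ico)
next
  case top
  have eq: "{u::real. 0\<le>u \<and> ennreal u < m} = {0..}" using top by auto
  have le: "of_nat n \<le> emeasure lborel {0::real..}" for n
  proof -
    have "of_nat n = emeasure lborel {0..<real n}" by (simp add: emeasure_lborel_Ico ennreal_of_nat_eq_real_of_nat)
    also have "\<dots> \<le> emeasure lborel {0::real..}" by (intro emeasure_mono) auto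
    finally show ?thesis .
  qed
  have "emeasure lborel {0::real..} = top"
  proof (rule ccontr)
    assume "emeasure lborel {0::real..} \<noteq> top"
    then obtain n where "emeasure lborel {0::real..} < of_nat n"
      using ennreal_Ex_less_of_nat top.not_eq_extremum by blast
    with le[of n] show False by simp
  qed
  then show ?thesis using top eq by simp
qed

lemma layer_cake:
  assumes Tp: "prob_space T" and Ts: "sets T = sets borel"
  shows "intFbar T r = (\<integral>\<^sup>+t. min t r \<partial>T)"
proof -
  interpret T: prob_space T by fact
  interpret TL: pair_sigma_finite T lborel
    by (intro pair_sigma_finite.intro T.sigma_finite_measure_axioms lborel.sigma_finite_measure_axioms)
  define h where "h t u = (if 0 \<le> u \<and> ennreal u < r \<and> ennreal u < t then 1 else 0 :: ennreal)" for t u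
  have spT: "space T = UNIV" using sets_eq_imp_space_eq[OF Ts] by simp
  have sTL[measurable_cong]: "sets (T \<Otimes>\<^sub>M lborel) = sets (borel \<Otimes>\<^sub>M borel)"
    by (intro sets_pair_measure_cong Ts) simp
  have hm: "(\<lambda>(t,u). h t u) \<in> borel_measurable (T \<Otimes>\<^sub>M lborel)"
    unfolding h_def by (subst measurable_cong_sets[OF sTL refl]) measurable
  have Fb: "ennreal (Fbar T (ennreal u)) = (\<integral>\<^sup>+t. indicator {ennreal u<..} t \<partial>T)" for u
  proof -
    have "{ennreal u<..} \<in> sets T" using Ts by simp
    then show ?thesis unfolding Fbar_def by (simp add: T.emeasure_eq_measure)
  qed
  have "intFbar T r = (\<integral>\<^sup>+u. \<integral>\<^sup>+t. h t u \<partial>T \<partial>lborel)"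
    unfolding intFbar_def Fb
  proof (intro nn_integral_cong)
    fix u :: real
    have "indicator {u::real. 0 \<le> u \<and> ennreal u < r} u * (\<integral>\<^sup>+t. indicator {ennreal u<..} t \<partial>T)
       = (\<integral>\<^sup>+t. indicator {u::real. 0 \<le> u \<and> ennreal u < r} u * indicator {ennreal u<..} t \<partial>T)"
      using Ts by (subst nn_integral_cmult) auto
    also have "\<dots> = (\<integral>\<^sup>+t. h t u \<partial>T)"
      by (intro nn_integral_cong) (auto simp: h_def indicator_def)
    finally show "indicator {u::real. 0 \<le> u \<and> ennreal u < r} u * (\<integral>\<^sup>+t. indicator {ennreal u<..} t \<partial>T) = (\<integral>\<^sup>+t. h t u \<partial>T)" .
  qed
  also have "\<dots> = (\<integral>\<^sup>+t. \<integral>\<^sup>+u. h t u \<partial>lborel \<partial>T)"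
    by (rule TL.Fubini'[OF hm])
  also have "\<dots> = (\<integral>\<^sup>+t. min t r \<partial>T)"
  proof (intro nn_integral_cong)
    fix t
    have "(\<integral>\<^sup>+u. h t u \<partial>lborel) = (\<integral>\<^sup>+u. indicator {u::real. 0 \<le> u \<and> ennreal u < min t r} u \<partial>lborel)"
      by (intro nn_integral_cong) (auto simp: h_def indicator_def)
    then show "(\<integral>\<^sup>+u. h t u \<partial>lborel) = min t r" using len_ind[of "min t r"] by simp
  qed
  finally show ?thesis .
qed

lemma Fdist_eq:
  assumes Tp: "prob_space T" and Ts: "sets T = sets borel"
  shows "ennreal (Fdist T r) = emeasure T {..r}"
proof -
  interpret T: prob_space T by fact
  have spT: "space T = UNIV" using sets_eq_imp_space_eq[OF Ts] by simp
  have "{r<..} \<in> sets T" using Ts by simp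
  from T.prob_compl[OF this] have "measure T {..r} = 1 - measure T {r<..}"
    using spT by (simp add: Compl_eq_Diff_UNIV[symmetric] not_less atMost_def greaterThan_def Collect_neg_eq[symmetric])
  then show ?thesis unfolding Fdist_def Fbar_def by (simp add: T.emeasure_eq_measure)
qed
lemma g_meas:
  assumes Tp: "prob_space T" and Ts: "sets T = sets borel"
  shows "intFbar T \<in> borel_measurable borel"
proof -
  interpret T: prob_space T by fact
  have s[measurable_cong]: "sets (borel \<Otimes>\<^sub>M T) = sets (borel \<Otimes>\<^sub>M borel)"
    by (intro sets_pair_measure_cong Ts) simp
  have "(\<lambda>(r,t). min t (r::ennreal)) \<in> borel_measurable (borel \<Otimes>\<^sub>M T)"
    by (subst measurable_cong_sets[OF s refl]) measurable
  then have "(\<lambda>r. \<integral>\<^sup>+t. min t r \<partial>T) \<in> borel_measurable borel"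
    by (rule T.borel_measurable_nn_integral)
  moreover have "intFbar T = (\<lambda>r. \<integral>\<^sup>+t. min t r \<partial>T)"
    using layer_cake[OF Tp Ts] by auto
  ultimately show ?thesis by simp
qed

lemma F_meas:
  assumes Tp: "prob_space T" and Ts: "sets T = sets borel"
  shows "(\<lambda>r. ennreal (Fdist T r)) \<in> borel_measurable borel"
proof -
  interpret T: prob_space T by fact
  have s[measurable_cong]: "sets (borel \<Otimes>\<^sub>M T) = sets (borel \<Otimes>\<^sub>M borel)"
    by (intro sets_pair_measure_cong Ts) simp
  have "(\<lambda>(r,t). if t \<le> (r::ennreal) then 1 else 0::ennreal) \<in> borel_measurable (borel \<Otimes>\<^sub>M T)"
    by (subst measurable_cong_sets[OF s refl]) measurable
  then have "(\<lambda>r. \<integral>\<^sup>+t. (if t \<le> r then 1 else 0::ennreal) \<partial>T) \<in> borel_measurable borel"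
    by (rule T.borel_measurable_nn_integral)
  moreover have "(\<integral>\<^sup>+t. (if t \<le> r then 1 else 0::ennreal) \<partial>T) = ennreal (Fdist T r)" for r
  proof -
    have "(\<integral>\<^sup>+t. (if t \<le> r then 1 else 0::ennreal) \<partial>T) = (\<integral>\<^sup>+t. indicator {..r} t \<partial>T)"
      by (intro nn_integral_cong) (auto simp: indicator_def)
    also have "\<dots> = emeasure T {..r}" using Ts by simp
    finally show ?thesis using Fdist_eq[OF Tp Ts] by simp
  qed
  ultimately show ?thesis by simp
qed

lemma num_den:
  assumes Tp: "prob_space T" and Ts: "sets T = sets borel"
    and Rp: "prob_space R" and Rs: "sets R = sets borel"
  shows "(\<integral>\<^sup>+ p. min (fst p) (snd p) \<partial>(T \<Otimes>\<^sub>M R)) = (\<integral>\<^sup>+ r. intFbar T r \<partial>R)"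
    and "emeasure (T \<Otimes>\<^sub>M R) {p. fst p \<le> snd p} = (\<integral>\<^sup>+ r. ennreal (Fdist T r) \<partial>R)"
proof -
  interpret T: prob_space T by fact
  interpret R: prob_space R by fact
  interpret TR: pair_prob_space T R by unfold_locales
  have s[measurable_cong]: "sets (T \<Otimes>\<^sub>M R) = sets (borel \<Otimes>\<^sub>M borel)"
    by (intro sets_pair_measure_cong Ts Rs)
  have "(\<lambda>p::ennreal\<times>ennreal. min (fst p) (snd p)) \<in> borel_measurable (T \<Otimes>\<^sub>M R)"
    by (subst measurable_cong_sets[OF s refl]) measurable
  then have "(\<integral>\<^sup>+ p. min (fst p) (snd p) \<partial>(T \<Otimes>\<^sub>M R)) = (\<integral>\<^sup>+ r. \<integral>\<^sup>+ t. min t r \<partial>T \<partial>R)"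
    by (subst TR.nn_integral_snd[symmetric]) auto
  also have "\<dots> = (\<integral>\<^sup>+ r. intFbar T r \<partial>R)"
    using layer_cake[OF Tp Ts] by simp
  finally show "(\<integral>\<^sup>+ p. min (fst p) (snd p) \<partial>(T \<Otimes>\<^sub>M R)) = (\<integral>\<^sup>+ r. intFbar T r \<partial>R)" .
  have "{x\<in>space (borel \<Otimes>\<^sub>M borel). fst x \<le> snd (x::ennreal\<times>ennreal)} \<in> sets (borel \<Otimes>\<^sub>M borel)" by measurable
  then have B: "{p::ennreal\<times>ennreal. fst p \<le> snd p} \<in> sets (T \<Otimes>\<^sub>M R)" unfolding s by (simp add: space_pair_measure)
  have "emeasure (T \<Otimes>\<^sub>M R) {p. fst p \<le> snd p} = (\<integral>\<^sup>+ r. emeasure T ((\<lambda>x. (x, r)) -` {p. fst p \<le> snd p}) \<partial>R)"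
    by (rule TR.emeasure_pair_measure_alt2[OF B])
  also have "\<dots> = (\<integral>\<^sup>+ r. ennreal (Fdist T r) \<partial>R)"
    by (intro nn_integral_cong) (simp add: Fdist_eq[OF Tp Ts] atMost_def)
  finally show "emeasure (T \<Otimes>\<^sub>M R) {p. fst p \<le> snd p} = (\<integral>\<^sup>+ r. ennreal (Fdist T r) \<partial>R)" .
qed

lemma F_pos:
  assumes hT: "standing_T T" and r: "0 < r"
  shows "0 < Fdist T r"
proof -
  have Tp: "prob_space T" and Ts: "sets T = sets borel" and inf: "Inf (measure_support T) = 0"
    using hT by (auto simp: standing_T_def is_law_def)
  interpret T: prob_space T by fact
  have "0 \<le> Fdist T r" unfolding Fdist_def Fbar_def by simp
  moreover have "Fdist T r \<noteq> 0"
  proof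
    assume "Fdist T r = 0"
    then have "emeasure T {..r} = 0" using Fdist_eq[OF Tp Ts, of r] by simp
    moreover have "emeasure T {..<r} \<le> emeasure T {..r}"
      using Ts by (intro emeasure_mono) auto
    ultimately have z: "emeasure T {..<r} = 0" by simp
    have "r \<le> x" if "x \<in> measure_support T" for x
    proof (rule ccontr)
      assume "\<not> r \<le> x"
      then have "x \<in> {..<r}" by simp
      with that have "emeasure T {..<r} > 0" unfolding measure_support_def by auto
      with z show False by simp
    qed
    then have "r \<le> Inf (measure_support T)" by (rule Inf_greatest)
    with inf r show False by simp
  qed
  ultimately show ?thesis by simp
qed
lemma Flim_lem:
  fixes T :: "ennreal measure" and F :: "ennreal \<Rightarrow> ennreal"
  assumes Tp: "prob_space T" and Ts: "sets T = sets borel" and F_em: "\<And>r. F r = emeasure T {..r}"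
  and Tinf: "emeasure T {top} = 0"
  shows "(SUP n. F (of_nat (Suc n))) = 1"
  proof -
  interpret T: prob_space T by fact
    have "(SUP n. F (of_nat (Suc n))) = emeasure T (\<Union>n. {..of_nat (Suc n)})"
      unfolding F_em
    proof (intro SUP_emeasure_incseq)
      show "range (\<lambda>n. {..of_nat (Suc n)::ennreal}) \<subseteq> sets T" using Ts by (simp add: image_subset_iff)
      show "incseq (\<lambda>n. {..of_nat (Suc n)::ennreal})"
      proof (rule monoI)
        fix m n :: nat assume "m \<le> n"
        then have "(of_nat (Suc m) :: ennreal) \<le> of_nat (Suc n)" by (simp only: of_nat_le_iff Suc_le_mono)
        then show "{..of_nat (Suc m)::ennreal} \<le> {..of_nat (Suc n)}" by auto
      qed
    qed
    also have "(\<Union>n. {..of_nat (Suc n)}) = {..<top::ennreal}"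
    proof (intro set_eqI iffI)
      fix x :: ennreal assume "x \<in> (\<Union>n. {..of_nat (Suc n)})"
      then obtain n where "x \<le> of_nat (Suc n)" by auto
      then show "x \<in> {..<top}" unfolding lessThan_iff by (rule le_less_trans) (rule of_nat_less_top)
    next
      fix x :: ennreal assume "x \<in> {..<top}"
      then obtain n where "x < of_nat n" using ennreal_Ex_less_of_nat by auto
      moreover have "(of_nat n :: ennreal) \<le> of_nat (Suc n)" by (simp only: of_nat_le_iff)
      ultimately have "x \<le> of_nat (Suc n)" by (meson less_imp_le order.trans)
      then show "x \<in> (\<Union>n. {..of_nat (Suc n)})" by blast
    qed
    also have "emeasure T {..<top::ennreal} = 1"
    proof -
      have e: "{..<top::ennreal} = space T - {top}" using sets_eq_imp_space_eq[OF Ts] by (auto simp flip: top.not_eq_extremum)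
      have "emeasure T (space T - {top}) = 1"
        using emeasure_compl[of "{top}" T] Ts Tinf T.emeasure_space_1 by simp
      then show ?thesis unfolding e .
    qed
    finally show ?thesis .
  qed
lemma SUP_Suc_top: "(SUP n. of_nat (Suc n) :: ennreal) = top"
proof -
  have "(SUP n. of_nat n :: ennreal) \<le> (SUP n. of_nat (Suc n))"
  proof (rule SUP_least)
    fix n
    have "(of_nat n :: ennreal) \<le> of_nat (Suc n)" by (simp only: of_nat_le_iff)
    also have "\<dots> \<le> (SUP n. of_nat (Suc n) :: ennreal)" by (rule SUP_upper) simp
    finally show "(of_nat n :: ennreal) \<le> (SUP n. of_nat (Suc n))" .
  qed
  then show ?thesis by (simp add: ennreal_SUP_of_nat_eq_top top_unique)
qed

lemma glim_lem:
  fixes T :: "ennreal measure" and g :: "ennreal \<Rightarrow> ennreal"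
  assumes Ts: "sets T = sets borel" and g_lc: "\<And>r. g r = (\<integral>\<^sup>+t. min t r \<partial>T)"
  shows "(SUP n. g (of_nat (Suc n))) = mean T"
proof -
  have "(SUP n. g (of_nat (Suc n))) = (SUP n. \<integral>\<^sup>+t. min t (of_nat (Suc n)) \<partial>T)"
    unfolding g_lc ..
  also have "\<dots> = (\<integral>\<^sup>+t. (SUP n. min t (of_nat (Suc n))) \<partial>T)"
  proof (rule nn_integral_monotone_convergence_SUP[symmetric])
    show "incseq (\<lambda>n t. min t (of_nat (Suc n) :: ennreal))"
    proof (rule monoI, rule le_funI)
      fix m n :: nat and t :: ennreal assume "m \<le> n"
      then have "(of_nat (Suc m) :: ennreal) \<le> of_nat (Suc n)" by (simp only: of_nat_le_iff Suc_le_mono)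
      then show "min t (of_nat (Suc m)) \<le> min t (of_nat (Suc n))" by (rule min.mono[OF order.refl])
    qed
    show "(\<lambda>t. min t (of_nat (Suc n))) \<in> borel_measurable T" for n
      using Ts by (subst measurable_cong_sets[OF Ts refl]) measurable
  qed
  also have "\<dots> = mean T" unfolding mean_def
  proof (intro nn_integral_cong)
    fix t :: ennreal
    show "(SUP n. min t (of_nat (Suc n))) = t"
    proof (rule antisym)
      show "(SUP n. min t (of_nat (Suc n))) \<le> t" by (rule SUP_least) simp
    next
      show "t \<le> (SUP n. min t (of_nat (Suc n)))"
      proof (cases "t = top")
        case True
        have h: "(SUP n. of_nat (Suc n) :: ennreal) \<le> (SUP n. min t (of_nat (Suc n)))"
          using True by simp
        show ?thesis by (metis True SUP_Suc_top h)
      next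
        case False
        then obtain n where n: "t < of_nat n" using ennreal_Ex_less_of_nat top.not_eq_extremum by blast
        have "(of_nat n :: ennreal) \<le> of_nat (Suc n)" by (simp only: of_nat_le_iff)
        with n have "t \<le> of_nat (Suc n)" by (meson less_imp_le order.trans)
        then have "min t (of_nat (Suc n)) = t" by (rule min_absorb1)
        moreover have "min t (of_nat (Suc n)) \<le> (SUP n. min t (of_nat (Suc n)))" by (rule SUP_upper) simp
        ultimately show ?thesis by simp
      qed
    qed
  qed
  finally show ?thesis .
qed
lemma reset_law_return:
  assumes "0 < x" shows "reset_law (return borel (ennreal x))"
  using assms by (simp add: reset_law_def is_law_def prob_space_return emeasure_return indicator_def)

theorem mainTheorem6:
  fixes T :: "ennreal measure"
  assumes hT: "standing_T T"
    and m0: "mean T < \<infinity>"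
  shows "(\<forall>R. reset_law R \<longrightarrow>
            mean (reset_law_of T R)
              = (\<integral>\<^sup>+ p. min (fst p) (snd p) \<partial>(T \<Otimes>\<^sub>M R)) / emeasure (T \<Otimes>\<^sub>M R) {p. fst p \<le> snd p}
          \<and> mean (reset_law_of T R)
              = (\<integral>\<^sup>+ r. intFbar T r \<partial>R) / (\<integral>\<^sup>+ r. ennreal (Fdist T r) \<partial>R)
          \<and> (INF t\<in>{0<..}. ratio T t) \<le> mean (reset_law_of T R)
          \<and> mean (reset_law_of T R) \<le> (SUP t\<in>{0<..}. ratio T t))
     \<and> (SUP R\<in>{R. reset_law R}. mean (reset_law_of T R))
          = (SUP r\<in>{0<..}. mean (reset_law_of T (return borel (ennreal r))))
     \<and> (SUP r\<in>{0<..}. mean (reset_law_of T (return borel (ennreal r))))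
          = (SUP t\<in>{0<..}. ratio T t)
     \<and> (INF R\<in>{R. reset_law R}. mean (reset_law_of T R))
          = (INF r\<in>{0<..}. mean (reset_law_of T (return borel (ennreal r))))
     \<and> (INF r\<in>{0<..}. mean (reset_law_of T (return borel (ennreal r))))
          = (INF t\<in>{0<..}. ratio T t)"
proof -
  have Tp: "prob_space T" and Ts: "sets T = sets borel"
    using hT by (auto simp: standing_T_def is_law_def)
  interpret T: prob_space T by fact
  define g where "g = intFbar T"
  define F where "F r = ennreal (Fdist T r)" for r
  define I where "I = (INF t\<in>{0::real<..}. ratio T t)"
  define S where "S = (SUP t\<in>{0::real<..}. ratio T t)"
  have gm[measurable]: "g \<in> borel_measurable borel" unfolding g_def by (rule g_meas[OF Tp Ts])
  have Fm[measurable]: "F \<in> borel_measurable borel" unfolding F_def by (rule F_meas[OF Tp Ts])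
  have g_lc: "g r = (\<integral>\<^sup>+t. min t r \<partial>T)" for r unfolding g_def by (rule layer_cake[OF Tp Ts])
  have F_em: "F r = emeasure T {..r}" for r unfolding F_def by (rule Fdist_eq[OF Tp Ts])
  have g_mono: "g r \<le> g r'" if "r \<le> r'" for r r'
    unfolding g_lc using that by (intro nn_integral_mono) (auto simp: min_def)
  have F_le1: "F r \<le> 1" for r unfolding F_em using T.emeasure_space_1 Ts
    by (metis T.measure_le_1 T.emeasure_eq_measure ennreal_le_1)
  have F_mono: "F r \<le> F r'" if "r \<le> r'" for r r'
    unfolding F_em using that Ts by (intro emeasure_mono) auto
  have F_pos': "0 < F (ennreal x)" if "0 < x" for x
    unfolding F_def using F_pos[OF hT, of "ennreal x"] that by simp
  have "{top::ennreal<..} = {}" by auto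
  then have F_top: "F top = 1" unfolding F_def Fdist_def Fbar_def by simp
  have g_top: "g top = mean T" unfolding g_lc mean_def by simp
  have g_zero: "g 0 = 0" unfolding g_def intFbar_def by simp
  have g_le: "g (ennreal x) \<le> ennreal x" if "0 \<le> x" for x
  proof -
    have "g (ennreal x) \<le> (\<integral>\<^sup>+u. indicator {u::real. 0 \<le> u \<and> ennreal u < ennreal x} u \<partial>lborel)"
      unfolding g_def intFbar_def
      by (intro nn_integral_mono) (auto simp: indicator_def Fbar_def)
    then show ?thesis by (simp add: len_ind)
  qed
  have ratio_eq: "ratio T x = g (ennreal x) / F (ennreal x)" for x
    unfolding ratio_def g_def F_def ..
  have ratio_mul: "ratio T x * F (ennreal x) = g (ennreal x)" if "0 < x" for x
  proof -
    have "F (ennreal x) \<noteq> 0" "F (ennreal x) < top" using F_pos'[OF that] F_le1[of "ennreal x"]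
      by (auto simp: top.not_eq_extremum order.strict_trans1)
    then show ?thesis unfolding ratio_eq by (simp add: ennreal_divide_times ennreal_divide_self)
  qed
  have g_le_ratio: "g (ennreal x) \<le> ratio T x" if "0 < x" for x
  proof -
    have "g (ennreal x) = ratio T x * F (ennreal x)" using ratio_mul[OF that] by simp
    also have "\<dots> \<le> ratio T x * 1" by (intro mult_left_mono F_le1) auto
    finally show ?thesis by simp
  qed
  have I_le: "I \<le> ratio T x" if "0 < x" for x unfolding I_def using that by (intro INF_lower) auto
  have S_ge: "ratio T x \<le> S" if "0 < x" for x unfolding S_def using that by (intro SUP_upper) auto
  have Tinf: "emeasure T {top} = 0"
  proof (rule ccontr)
    assume "emeasure T {top} \<noteq> 0"
    have "top * emeasure T {top} \<le> mean T"
      unfolding mean_def using Ts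
      by (subst nn_integral_cmult_indicator[symmetric]) (auto intro!: nn_integral_mono simp: indicator_def)
    with \<open>emeasure T {top} \<noteq> 0\<close> m0 show False by (simp add: ennreal_top_mult)
  qed
  have Flim: "(SUP n. F (of_nat (Suc n))) = 1" by (rule Flim_lem[OF Tp Ts F_em Tinf])
  have glim: "(SUP n. g (of_nat (Suc n))) = mean T" by (rule glim_lem[OF Ts g_lc])
  have ofn: "(of_nat (Suc n) :: ennreal) = ennreal (real (Suc n))" for n
    by (simp add: ennreal_of_nat_eq_real_of_nat)
  have PW: "I * F r \<le> g r \<and> g r \<le> S * F r" for r
  proof (cases r rule: ennreal_cases)
    case (real x)
    show ?thesis
    proof (cases "0 < x")
      case True
      have "I * F r \<le> ratio T x * F r" using I_le[OF True] by (intro mult_right_mono) auto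
      moreover have "ratio T x * F r \<le> S * F r" using S_ge[OF True] by (intro mult_right_mono) auto
      ultimately show ?thesis using ratio_mul[OF True] real by simp
    next
      case False
      have "x = 0" using False real by linarith
      then have r0: "r = 0" using real by simp
      have eps: "I * F 0 \<le> 0 + ennreal e" if "0 < e" for e
      proof (cases "F 0 = 0")
        case True then show ?thesis by simp
      next
        case False
        then have F0: "0 < F 0" by (simp add: zero_less_iff_neq_zero)
        then obtain f0 where f0: "F 0 = ennreal f0" "0 < f0" "f0 \<le> 1"
          using F_le1[of 0] by (cases "F 0" rule: ennreal_cases) (auto simp: ennreal_le_1 top_unique)
        define y where "y = e * f0"
        have y0: "0 < y" using that f0 by (simp add: y_def)
        have "I * F 0 \<le> ratio T y * F (ennreal y)"
          using I_le[OF y0] F_mono[of 0 "ennreal y"] by (intro mult_mono) auto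
        also have "\<dots> = g (ennreal y)" by (rule ratio_mul[OF y0])
        also have "\<dots> \<le> ennreal y" using g_le y0 by simp
        also have "ennreal y \<le> ennreal e" unfolding y_def using f0 that
          by (intro ennreal_leI) (simp add: mult_left_le)
        finally show ?thesis by simp
      qed
      have "I * F 0 \<le> 0"
      proof (rule ennreal_le_epsilon)
        fix e :: real assume "0 < e" then show "I * F 0 \<le> 0 + ennreal e" by (rule eps)
      qed
      then show ?thesis unfolding r0 g_zero by simp
    qed
  next
    case top
    have gS: "g (of_nat (Suc n)) \<le> S" for n
      unfolding ofn by (rule order.trans[OF g_le_ratio S_ge]) simp_all
    have mS: "mean T \<le> S" unfolding glim[symmetric] by (rule SUP_least) (rule gS)
    have IFg: "I * F (of_nat (Suc n)) \<le> g (of_nat (Suc n))" for n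
    proof -
      have p: "0 < real (Suc n)" by simp
      have "I * F (ennreal (real (Suc n))) \<le> ratio T (real (Suc n)) * F (ennreal (real (Suc n)))"
        by (rule mult_right_mono[OF I_le[OF p]]) simp
      also have "\<dots> = g (ennreal (real (Suc n)))" by (rule ratio_mul[OF p])
      finally show ?thesis unfolding ofn .
    qed
    have "I = I * (SUP n. F (of_nat (Suc n)))" unfolding Flim by simp
    also have "\<dots> = (SUP n. I * F (of_nat (Suc n)))" by (rule SUP_mult_left_ennreal)
    also have "\<dots> \<le> (SUP n. g (of_nat (Suc n)))" by (rule SUP_mono) (blast intro: IFg)
    also have "\<dots> = mean T" by (rule glim)
    finally have Im: "I \<le> mean T" .
    show ?thesis unfolding top F_top g_top using mS Im by simp
  qed
  have main: "mean (reset_law_of T R)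
              = (\<integral>\<^sup>+ p. min (fst p) (snd p) \<partial>(T \<Otimes>\<^sub>M R)) / emeasure (T \<Otimes>\<^sub>M R) {p. fst p \<le> snd p}
          \<and> mean (reset_law_of T R)
              = (\<integral>\<^sup>+ r. intFbar T r \<partial>R) / (\<integral>\<^sup>+ r. ennreal (Fdist T r) \<partial>R)
          \<and> I \<le> mean (reset_law_of T R)
          \<and> mean (reset_law_of T R) \<le> S" if hR: "reset_law R" for R
  proof -
    have Rp: "prob_space R" and Rs: "sets R = sets borel" and R0: "emeasure R {0<..} > 0"
      using hR by (auto simp: reset_law_def is_law_def)
    interpret R: prob_space R by fact
    have FmR: "F \<in> borel_measurable R" using Fm by (subst measurable_cong_sets[OF Rs refl])
    have gmR: "g \<in> borel_measurable R" using gm by (subst measurable_cong_sets[OF Rs refl])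
    define N where "N = (\<integral>\<^sup>+ r. g r \<partial>R)"
    define D where "D = (\<integral>\<^sup>+ r. F r \<partial>R)"
    have numeq: "(\<integral>\<^sup>+ p. min (fst p) (snd p) \<partial>(T \<Otimes>\<^sub>M R)) = N"
      unfolding N_def g_def by (rule num_den(1)[OF Tp Ts Rp Rs])
    have deneq: "emeasure (T \<Otimes>\<^sub>M R) {p. fst p \<le> snd p} = D"
      unfolding D_def F_def by (rule num_den(2)[OF Tp Ts Rp Rs])
    have D0: "D \<noteq> 0"
    proof
      assume "D = 0"
      then have "AE r in R. F r = 0" unfolding D_def using nn_integral_0_iff_AE[OF FmR] by simp
      then have "AE r in R. r \<notin> {0<..}"
      proof (rule eventually_mono)
        fix r assume "F r = 0"
        show "r \<notin> {0<..}"
        proof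
          assume "r \<in> {0<..}"
          then have "0 < Fdist T r" using F_pos[OF hT, of r] by simp
          with \<open>F r = 0\<close> show False unfolding F_def by simp
        qed
      qed
      moreover have "{0<..} \<in> sets R" using Rs by simp
      moreover have "{x \<in> space R. \<not> (x \<notin> {0<..})} = {0<..}"
        using sets_eq_imp_space_eq[OF Rs] by (auto simp: zero_less_iff_neq_zero)
      ultimately have "emeasure R {0<..} = 0"
        using AE_iff_measurable[of "{0<..}" R "\<lambda>r. r \<notin> {0<..}"] by blast
      with R0 show False by simp
    qed
    have D1: "D \<le> 1"
    proof -
      have "D \<le> (\<integral>\<^sup>+ r. 1 \<partial>R)" unfolding D_def by (intro nn_integral_mono F_le1)
      also have "\<dots> = 1" using R.emeasure_space_1 by simp
      finally show ?thesis .
    qed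
    then have Dtop: "D \<noteq> top" by (auto simp: top_unique)
    have eq1: "mean (reset_law_of T R) = N / D"
      using reset_mean[OF Tp Ts Rp Rs] D0 unfolding numeq deneq by (simp add: zero_less_iff_neq_zero)
    have NS: "N \<le> S * D"
    proof -
      have "N \<le> (\<integral>\<^sup>+ r. S * F r \<partial>R)" unfolding N_def using PW by (intro nn_integral_mono) auto
      also have "\<dots> = S * D" unfolding D_def by (rule nn_integral_cmult[OF FmR])
      finally show ?thesis .
    qed
    have IN: "I * D \<le> N"
    proof -
      have "I * D = (\<integral>\<^sup>+ r. I * F r \<partial>R)" unfolding D_def by (rule nn_integral_cmult[OF FmR, symmetric])
      also have "\<dots> \<le> N" unfolding N_def using PW by (intro nn_integral_mono) auto
      finally show ?thesis .
    qed
    have up: "N / D \<le> S"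
      by (rule divide_le_posI_ennreal) (use D0 NS in \<open>auto simp: zero_less_iff_neq_zero mult.commute\<close>)
    have lo: "I \<le> N / D"
    proof -
      have "I = I * D / D" using D0 Dtop by (simp add: ennreal_mult_divide_eq)
      also have "\<dots> \<le> N / D" by (rule divide_right_mono_ennreal[OF IN])
      finally show ?thesis .
    qed
    show ?thesis using eq1 up lo unfolding numeq deneq N_def D_def g_def F_def by simp
  qed
  have delta: "mean (reset_law_of T (return borel (ennreal x))) = ratio T x" if x: "0 < x" for x
  proof -
    have "mean (reset_law_of T (return borel (ennreal x)))
        = (\<integral>\<^sup>+ r. intFbar T r \<partial>return borel (ennreal x)) / (\<integral>\<^sup>+ r. ennreal (Fdist T r) \<partial>return borel (ennreal x))"
      using main[OF reset_law_return[OF x]] by blast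
    also have "(\<integral>\<^sup>+ r. intFbar T r \<partial>return borel (ennreal x)) = intFbar T (ennreal x)"
      using gm unfolding g_def by (intro nn_integral_return) auto
    also have "(\<integral>\<^sup>+ r. ennreal (Fdist T r) \<partial>return borel (ennreal x)) = ennreal (Fdist T (ennreal x))"
      using Fm unfolding F_def by (intro nn_integral_return) auto
    finally show ?thesis unfolding ratio_def .
  qed
  have SUPd: "(SUP r\<in>{0<..}. mean (reset_law_of T (return borel (ennreal r)))) = S"
    unfolding S_def by (rule SUP_cong) (auto simp: delta)
  have INFd: "(INF r\<in>{0<..}. mean (reset_law_of T (return borel (ennreal r)))) = I"
    unfolding I_def by (rule INF_cong) (auto simp: delta)
  have SUPR: "(SUP R\<in>{R. reset_law R}. mean (reset_law_of T R)) = S"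
  proof (rule antisym)
    show "(SUP R\<in>{R. reset_law R}. mean (reset_law_of T R)) \<le> S"
      by (rule SUP_least) (use main in blast)
    show "S \<le> (SUP R\<in>{R. reset_law R}. mean (reset_law_of T R))"
      unfolding SUPd[symmetric]
    proof (rule SUP_least)
      fix x :: real assume "x \<in> {0<..}"
      then show "mean (reset_law_of T (return borel (ennreal x))) \<le> (SUP R\<in>{R. reset_law R}. mean (reset_law_of T R))"
        by (intro SUP_upper) (simp add: reset_law_return)
    qed
  qed
  have INFR: "(INF R\<in>{R. reset_law R}. mean (reset_law_of T R)) = I"
  proof (rule antisym)
    show "I \<le> (INF R\<in>{R. reset_law R}. mean (reset_law_of T R))"
      by (rule INF_greatest) (use main in blast)
    show "(INF R\<in>{R. reset_law R}. mean (reset_law_of T R)) \<le> I"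
      unfolding INFd[symmetric]
    proof (rule INF_greatest)
      fix x :: real assume "x \<in> {0<..}"
      then show "(INF R\<in>{R. reset_law R}. mean (reset_law_of T R)) \<le> mean (reset_law_of T (return borel (ennreal x)))"
        by (intro INF_lower) (simp add: reset_law_return)
    qed
  qed
  show ?thesis
    unfolding I_def[symmetric] S_def[symmetric] SUPd INFd SUPR INFR
    using main by blast
qed

end
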